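(* Fix an integer $k\ge2$ and let $w$ and $\widetilde w$ be as in the context. Then for all $x\in\mathbb R$, $$Mw(x)\le\frac92\,\widetilde w(x).$$
   Context: All intervals are half-open, $[a,b)$. $Mf(x)=\sup_{I\ni x}\frac1{|I|}\int_I|f|$ over intervals $I\ni x$. Fix an integer $k\ge2$, $\varepsilon=3^{-k}$, $p=\frac{1}{3\varepsilon}\Big(\frac{1+\varepsilon}{2}+\frac{4\varepsilon^2}{1+\varepsilon}\Big)$, $u=\sqrt p+\sqrt{p-1}$. For an interval $I$: $I_\pm$ its left/right halves; $I_m$ ($0\le m\le k-1$) the interval with the same right endpoint as $I$ and length $3^{-m}|I|$; $J^{(i)}$ ($i=1,2,3$) the $i$-th from the left of the three equal thirds of $J$. For $\omega\sigma=p$: $w_0(\omega,\sigma,I)=\frac{\omega}{\sqrt p}(u\chi_{I_-}+u^{-1}\chi_{I_+})$ and, for $\nu\ge1$, $w_\nu(\omega,\sigma,I)=\frac{\omega}{p}\big(\sum_{m=0}^{k-2}\chi_{I_m^{(1)}}+\chi_{I_{k-1}^{(1)}\cup I_{k-1}^{(2)}}+\frac{4\varepsilon}{1+\varepsilon}\chi_{I_{k-1}^{(3)}}\big)+\sum_{m=0}^{k-2}w_{\nu-1}(2\omega,\frac\sigma2,I_m^{(2)})$. Let $n=3^{k-1}$ and let $w$ be the $1$-periodic extension of $w_n(1,p,[0,1))$ to $\mathbb R$. Carrying: each $[j,j+1)$, $j\in\mathbb Z$, carries $w_n$; if $I$ carries $w_\nu$ with $\nu\ge1$, then each $I_m^{(2)}$,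 $0\le m\le k-2$, carries $w_{\nu-1}$. $\operatorname{supp}w_\nu$ denotes the union of all intervals carrying $w_\nu$. Define the $1$-periodic function $\widetilde w=\sum_{l=1}^n2^l\chi_{\operatorname{supp}w_{n-(l-1)}\setminus\operatorname{supp}w_{n-l}}+2^{n+1}\chi_{\operatorname{supp}w_0}$. *)

theory Defs
  imports "HOL-Analysis.Analysis"
begin

definition ivl :: "real \<times> real \<Rightarrow> real set" where
  "ivl I = {fst I..<snd I}"

definition eps :: "nat \<Rightarrow> real" where
  "eps k = 1 / 3 ^ k"

definition pp :: "nat \<Rightarrow> real" where
  "pp k = (1 / (3 * eps k)) * ((1 + eps k) / 2 + 4 * (eps k)\<^sup>2 / (1 + eps k))"

definition uu :: "nat \<Rightarrow> real" where
  "uu k = sqrt (pp k) + sqrt (pp k - 1)"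

definition lhalf :: "real \<times> real \<Rightarrow> real \<times> real" where
  "lhalf I = (fst I, (fst I + snd I) / 2)"

definition rhalf :: "real \<times> real \<Rightarrow> real \<times> real" where
  "rhalf I = ((fst I + snd I) / 2, snd I)"

definition Im :: "nat \<Rightarrow> real \<times> real \<Rightarrow> real \<times> real" where
  "Im m I = (snd I - (snd I - fst I) / 3 ^ m, snd I)"

definition third :: "nat \<Rightarrow> real \<times> real \<Rightarrow> real \<times> real" where
  "third i J = (fst J + (real i - 1) * (snd J - fst J) / 3, fst J + real i * (snd J - fst J) / 3)"

text \<open>wfun k \<nu> \<omega> \<sigma> I is the function w_\<nu>(\<omega>,\<sigma>,I).\<close>
fun wfun :: "nat \<Rightarrow> nat \<Rightarrow> real \<Rightarrow> real \<Rightarrow> real \<times> real \<Rightarrow> real \<Rightarrow> real" where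
  "wfun k 0 \<omega> \<sigma> I x =
     \<omega> / sqrt (pp k) * (uu k * indicator (ivl (lhalf I)) x + (1 / uu k) * indicator (ivl (rhalf I)) x)"
| "wfun k (Suc \<nu>) \<omega> \<sigma> I x =
     \<omega> / pp k * ((\<Sum>m\<in>{0..k-2}. indicator (ivl (third 1 (Im m I))) x)
        + indicator (ivl (third 1 (Im (k-1) I)) \<union> ivl (third 2 (Im (k-1) I))) x
        + 4 * eps k / (1 + eps k) * indicator (ivl (third 3 (Im (k-1) I))) x)
     + (\<Sum>m\<in>{0..k-2}. wfun k \<nu> (2 * \<omega>) (\<sigma> / 2) (third 2 (Im m I)) x)"

definition nn :: "nat \<Rightarrow> nat" where
  "nn k = 3 ^ (k - 1)"

definition wper :: "nat \<Rightarrow> real \<Rightarrow> real" where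
  "wper k x = wfun k (nn k) 1 (pp k) (0, 1) (frac x)"

text \<open>carriers k d: intervals carrying w_{n-d} (d \<le> n).\<close>
fun carriers :: "nat \<Rightarrow> nat \<Rightarrow> (real \<times> real) set" where
  "carriers k 0 = {(of_int j, of_int j + 1) | j :: int. True}"
| "carriers k (Suc d) = {third 2 (Im m I) | I m. I \<in> carriers k d \<and> m \<le> k - 2}"

text \<open>supp w_\<nu> (for \<nu> \<le> n).\<close>
definition suppw :: "nat \<Rightarrow> nat \<Rightarrow> real set" where
  "suppw k \<nu> = (\<Union>I\<in>carriers k (nn k - \<nu>). ivl I)"

definition wtilde :: "nat \<Rightarrow> real \<Rightarrow> real" where
  "wtilde k x =
     (\<Sum>l\<in>{1..nn k}. 2 ^ l * indicator (suppw k (nn k - (l - 1)) - suppw k (nn k - l)) x)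
     + 2 ^ (nn k + 1) * indicator (suppw k 0) x"

definition maxfun :: "(real \<Rightarrow> real) \<Rightarrow> real \<Rightarrow> ereal" where
  "maxfun f x = (SUP I \<in> {(a, b). a \<le> x \<and> x < b}.
      ereal (integral {fst I..<snd I} (\<lambda>t. \<bar>f t\<bar>) / (snd I - fst I)))"

end

theory Submission
  imports Defs
begin


lemma hi_ind:
  fixes c e x y :: real
  shows "((indicator {x..<y} :: real \<Rightarrow> real) has_integral max 0 (min e y - max c x)) {c..<e}"
proof -
  have eq: "(indicator {x..<y} :: real \<Rightarrow> real) = (\<lambda>t. if t \<in> {x..<y} then 1 else 0)"
    by (auto simp: indicator_def)
  have "((\<lambda>t. 1::real) has_integral max 0 (min e y - max c x)) ({x..<y} \<inter> {c..<e})"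
  proof (cases "max c x \<le> min e y")
    case True
    have s: "{x..<y} \<inter> {c..<e} = {max c x..<min e y}" by auto
    have "((\<lambda>t. 1::real) has_integral (min e y - max c x)) {max c x..min e y}"
      using has_integral_const_real[of "1::real" "max c x" "min e y"] True by simp
    then have "((\<lambda>t. 1::real) has_integral (min e y - max c x)) {max c x..<min e y}"
      by (rule has_integral_spike_set_eq[THEN iffD1, rotated -1])
         (auto intro: negligible_subset[of "{min e y}"])
    then show ?thesis using True s by simp
  next
    case False
    then have s: "{x..<y} \<inter> {c..<e} = {}" by auto
    have z: "max 0 (min e y - max c x) = 0" using False by (auto simp: max_def min_def)
    show ?thesis unfolding s z by simp
  qed
  then show ?thesis unfolding eq by (rule has_integral_restrict_Int[THEN iffD2])
qed

lemma int_ind: "integral {c..<e} (indicator {x..<y} :: real \<Rightarrow> real) = max 0 (min e y - max c x)"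
  using hi_ind integral_unique by blast

lemma integrable_ind: "(indicator {x..<y} :: real \<Rightarrow> real) integrable_on {c..<e}"
  using hi_ind by blast

lemma int_one: fixes c e :: real shows "c \<le> e \<Longrightarrow> integral {c..<e} (\<lambda>_. 1::real) = e - c"
proof -
  assume "c \<le> e"
  have "integral {c..<e} (indicator {c..<e} :: real \<Rightarrow> real) = e - c"
    using \<open>c \<le> e\<close> by (simp add: int_ind)
  moreover have "integral {c..<e} (indicator {c..<e} :: real \<Rightarrow> real) = integral {c..<e} (\<lambda>_. 1::real)"
    by (rule integral_cong) simp
  ultimately show ?thesis by simp
qed

lemma integrable_one: fixes c e :: real shows "(\<lambda>_. 1::real) integrable_on {c..<e}"
proof -
  have "(indicator {c..<e} :: real \<Rightarrow> real) integrable_on {c..<e}" by (rule integrable_ind)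
  then show ?thesis by (rule integrable_eq) simp
qed

definition good :: "(real \<Rightarrow> real) \<Rightarrow> bool" where
  "good f \<longleftrightarrow> (\<forall>c e. f integrable_on {c..<e})"

lemma good_ind: "good (indicator {x..<y})"
  by (simp add: good_def integrable_ind)

lemma good_ivl: "good (indicator (ivl J))"
  by (simp add: ivl_def good_ind)

lemma good_add: "good f \<Longrightarrow> good g \<Longrightarrow> good (\<lambda>x. f x + g x)"
  by (simp add: good_def integrable_add)

lemma good_cmul: "good f \<Longrightarrow> good (\<lambda>x. r * f x)"
  using integrable_cmul[of f _ r] by (simp add: good_def)

lemma good_sum: "finite A \<Longrightarrow> (\<And>i. i \<in> A \<Longrightarrow> good (f i)) \<Longrightarrow> good (\<lambda>x. \<Sum>i\<in>A. f i x)"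
  by (simp add: good_def integrable_sum)

lemma int_cmul: "integral S (\<lambda>x. c * f x) = c * integral S (f::real\<Rightarrow>real)"
  using integral_cmul[of S c f] by simp

lemma good_int: "good f \<Longrightarrow> f integrable_on {c..<e}"
  by (simp add: good_def)



lemma eps_pos: "eps k > 0" by (simp add: eps_def)

lemma eps_le: "k \<ge> 2 \<Longrightarrow> eps k \<le> 1/9"
proof -
  assume k: "k \<ge> 2"
  have "(3::real)^2 \<le> 3^k" using k by (intro power_increasing) auto
  then show ?thesis by (simp add: eps_def divide_simps)
qed

lemma aux_inv: "(x::real) \<noteq> 0 \<Longrightarrow> (1/x) * Q * x = Q" by simp

lemma pp_eq: "pp k * (3 * eps k) = (1 + eps k)/2 + 4*(eps k)^2/(1+eps k)"
  unfolding pp_def using eps_pos[of k] by (intro aux_inv) simp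

lemma pow3_ge: "k \<ge> 2 \<Longrightarrow> real k + 1 \<le> 3^(k-1)"
proof (induction k rule: nat_induct_at_least)
  case base then show ?case by simp
next
  case (Suc n)
  have "(3::real)^(Suc n - 1) = 3 * 3^(n-1)" using Suc by (cases n) auto
  then show ?case using Suc by simp
qed

lemma pp_ge: "k \<ge> 2 \<Longrightarrow> pp k \<ge> 3^(k-1)/2"
proof -
  assume k: "k \<ge> 2"
  have e: "eps k > 0" by (rule eps_pos)
  have Q0: "4*(eps k)^2/(1+eps k) \<ge> 0" using e by simp
  have Q1: "(1 + eps k)/2 \<ge> 1/2" using e by simp
  have Q: "(1 + eps k)/2 + 4*(eps k)^2/(1+eps k) \<ge> 1/2" using Q1 Q0 by linarith
  have i: "1 / (3 * eps k) = 3^(k-1)"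
  proof -
    obtain j where j: "k = Suc j" using k by (cases k) auto
    show ?thesis by (simp add: eps_def j)
  qed
  have "pp k = 3^(k-1) * ((1 + eps k)/2 + 4*(eps k)^2/(1+eps k))"
    unfolding pp_def i ..
  also have "\<dots> \<ge> 3^(k-1) * (1/2)" using Q by (intro mult_left_mono) auto
  finally show ?thesis by simp
qed

lemma pp_ge1: "k \<ge> 2 \<Longrightarrow> pp k \<ge> 3/2"
proof -
  assume k: "k \<ge> 2"
  have "(3::real)^1 \<le> 3^(k-1)" using k by (intro power_increasing) auto
  then show ?thesis using pp_ge[OF k] by simp
qed

lemma kp: "k \<ge> 2 \<Longrightarrow> (real k + 1) / pp k \<le> 2"
proof -
  assume k: "k \<ge> 2"
  have "real k + 1 \<le> 2 * pp k" using pow3_ge[OF k] pp_ge[OF k] by simp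
  then show ?thesis using pp_ge1[OF k] by (simp add: divide_simps)
qed

lemma uu_pos: "k \<ge> 2 \<Longrightarrow> uu k > 0"
  using pp_ge1[of k] by (simp add: uu_def add_pos_nonneg)

lemma uu_inv: "k \<ge> 2 \<Longrightarrow> 1 / uu k = sqrt (pp k) - sqrt (pp k - 1)"
proof -
  assume k: "k \<ge> 2"
  have p: "pp k \<ge> 1" using pp_ge1[OF k] by simp
  have "uu k * (sqrt (pp k) - sqrt (pp k - 1)) = (sqrt (pp k))^2 - (sqrt (pp k - 1))^2"
    by (simp add: uu_def power2_eq_square algebra_simps)
  also have "\<dots> = 1" using p by simp
  finally show ?thesis using uu_pos[OF k] by (simp add: field_simps)
qed

lemma uu_sum: "k \<ge> 2 \<Longrightarrow> (uu k + 1 / uu k) / sqrt (pp k) = 2"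
proof -
  assume k: "k \<ge> 2"
  have "sqrt (pp k) > 0" using pp_ge1[OF k] by simp
  then show ?thesis using uu_inv[OF k] by (simp add: uu_def)
qed

lemma cc_bounds: "k \<ge> 2 \<Longrightarrow> 0 \<le> 4 * eps k / (1 + eps k) \<and> 4 * eps k / (1 + eps k) \<le> 1"
  using eps_le[of k] eps_pos[of k] by (simp add: divide_simps)

lemma geo_sum: "(\<Sum>m\<in>{0..j}. (1::real)/3^(Suc m)) = (1 - 1/3^(Suc j))/2"
proof (induction j)
  case 0 then show ?case by simp
next
  case (Suc j)
  have "(\<Sum>m\<in>{0..Suc j}. (1::real)/3^(Suc m)) = (\<Sum>m\<in>{0..j}. (1::real)/3^(Suc m)) + 1/3^(Suc (Suc j))"
    by simp
  also have "\<dots> = (1 - 1/3^(Suc j))/2 + 1/3^(Suc (Suc j))" by (simp only: Suc.IH)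
  also have "\<dots> = (1 - 1/3^(Suc (Suc j)))/2"
    by (simp only: power_Suc[of 3 "Suc j"]) (simp add: field_simps)
  finally show ?case .
qed

lemma geo_sum_k: "k \<ge> 2 \<Longrightarrow> (\<Sum>m\<in>{0..k-2}. (1::real)/3^(Suc m)) = (1 - 3 * eps k)/2"
proof -
  assume k: "k \<ge> 2"
  have "Suc (k-2) = k - 1" using k by simp
  moreover have "(1::real)/3^(k-1) = 3 * eps k"
  proof -
    obtain j where j: "k = Suc j" using k by (cases k) auto
    show ?thesis by (simp add: eps_def j)
  qed
  moreover have "(\<Sum>m\<in>{0..k-2}. (1::real)/3^(Suc m)) = (1 - 1/3^(Suc (k-2)))/2"
    by (rule geo_sum)
  ultimately show ?thesis by simp
qed

definition rr :: "nat \<Rightarrow> real \<Rightarrow> real \<Rightarrow> real" where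
  "rr m a b = (b - a) / 3^(Suc m)"

lemma third1: "third 1 (Im m (a,b)) = (b - 3 * rr m a b, b - 2 * rr m a b)"
  by (simp add: third_def Im_def rr_def field_simps)
lemma third2: "third 2 (Im m (a,b)) = (b - 2 * rr m a b, b - rr m a b)"
  by (simp add: third_def Im_def rr_def field_simps)
lemma third3: "third 3 (Im m (a,b)) = (b - rr m a b, b)"
  by (simp add: third_def Im_def rr_def field_simps)

lemma rr_pos: "a < b \<Longrightarrow> rr m a b > 0" by (simp add: rr_def)
lemma rr3: "3 * rr m a b = (b - a) / 3^m" by (simp add: rr_def field_simps)

lemma rr_le: "a \<le> b \<Longrightarrow> 3 * rr m a b \<le> b - a"
proof -
  assume ab: "a \<le> b"
  have "(b - a) / 3^m \<le> (b - a) / 1"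
    using ab by (intro divide_left_mono) (auto simp: one_le_power)
  then show ?thesis by (simp add: rr3)
qed

lemma rr_mono: "m < m' \<Longrightarrow> a < b \<Longrightarrow> 3 * rr m' a b \<le> rr m a b"
proof -
  assume mm: "m < m'" and ab: "a < b"
  have "(3::real)^(Suc m) \<le> 3^m'" using mm by (intro power_increasing) auto
  then have "(b - a) / 3^m' \<le> (b - a) / 3^(Suc m)"
    using ab by (intro divide_left_mono) auto
  then show ?thesis by (simp only: rr3) (simp add: rr_def)
qed

lemma rr_last: "k \<ge> 1 \<Longrightarrow> rr (k-1) a b = (b - a) * eps k"
  by (simp add: rr_def eps_def)



lemma ivl_pair[simp]: "ivl (a,b) = {a..<b}" by (simp add: ivl_def)

definition F :: "nat \<Rightarrow> nat \<Rightarrow> real \<Rightarrow> real \<times> real \<Rightarrow> real \<Rightarrow> real" where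
  "F k \<nu> \<omega> I = wfun k \<nu> \<omega> 1 I"

definition own :: "nat \<Rightarrow> real \<Rightarrow> real \<times> real \<Rightarrow> real \<Rightarrow> real" where
  "own k \<omega> I x = \<omega> / pp k * ((\<Sum>m\<in>{0..k-2}. indicator (ivl (third 1 (Im m I))) x)
        + indicator (ivl (third 1 (Im (k-1) I)) \<union> ivl (third 2 (Im (k-1) I))) x
        + 4 * eps k / (1 + eps k) * indicator (ivl (third 3 (Im (k-1) I))) x)"

lemma wfun_sigma: "wfun k \<nu> \<omega> \<sigma> I x = wfun k \<nu> \<omega> \<sigma>' I x"
proof (induction \<nu> arbitrary: \<omega> \<sigma> \<sigma>' I)
  case 0 then show ?case by simp
next
  case (Suc \<nu>)
  have "\<And>m. wfun k \<nu> (2*\<omega>) (\<sigma>/2) (third 2 (Im m I)) x = wfun k \<nu> (2*\<omega>) (\<sigma>'/2) (third 2 (Im m I)) x"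
    using Suc.IH by metis
  then show ?case by simp
qed

lemma F_0: "F k 0 \<omega> I x = \<omega> / sqrt (pp k) * (uu k * indicator (ivl (lhalf I)) x + (1 / uu k) * indicator (ivl (rhalf I)) x)"
  by (simp add: F_def)

lemma F_Suc: "F k (Suc \<nu>) \<omega> I x = own k \<omega> I x + (\<Sum>m\<in>{0..k-2}. F k \<nu> (2*\<omega>) (third 2 (Im m I)) x)"
  unfolding F_def own_def by (simp add: wfun_sigma[where \<sigma>="1/2" and \<sigma>'=1])

lemma F_Suc_fun: "F k (Suc \<nu>) \<omega> I = (\<lambda>x. own k \<omega> I x + (\<Sum>m\<in>{0..k-2}. F k \<nu> (2*\<omega>) (third 2 (Im m I)) x))"
  using F_Suc by blast

lemma third12: "a \<le> b \<Longrightarrow> ivl (third 1 (Im m (a,b))) \<union> ivl (third 2 (Im m (a,b))) = {b - 3 * rr m a b..<b - rr m a b}"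
proof -
  assume "a \<le> b"
  then have "rr m a b \<ge> 0" by (auto simp: rr_def)
  then show ?thesis unfolding third1 third2 ivl_pair by auto
qed

lemma own_alt: "a \<le> b \<Longrightarrow> own k \<omega> (a,b) x = \<omega> / pp k * ((\<Sum>m\<in>{0..k-2}. indicator {b - 3 * rr m a b..<b - 2 * rr m a b} x)
        + indicator {b - 3 * rr (k-1) a b..<b - rr (k-1) a b} x
        + 4 * eps k / (1 + eps k) * indicator {b - rr (k-1) a b..<b} x)"
  unfolding own_def by (simp only: third12) (simp only: third1 third3 ivl_pair)

lemma good_own: "good (own k \<omega> I)"
proof -
  have "own k \<omega> I = (\<lambda>x. \<omega> / pp k * ((\<Sum>m\<in>{0..k-2}. indicator (ivl (third 1 (Im m I))) x)
        + indicator (ivl (third 1 (Im (k-1) I)) \<union> ivl (third 2 (Im (k-1) I))) x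
        + 4 * eps k / (1 + eps k) * indicator (ivl (third 3 (Im (k-1) I))) x))"
    by (rule ext) (simp add: own_def)
  moreover have "good (indicator (ivl (third 1 (Im (k-1) I)) \<union> ivl (third 2 (Im (k-1) I))))"
  proof -
    obtain a b where I: "I = (a,b)" by (cases I)
    have "indicator (ivl (third 1 (Im (k-1) I)) \<union> ivl (third 2 (Im (k-1) I))) = 
       (\<lambda>x. indicator (ivl (third 1 (Im (k-1) I))) x + indicator (ivl (third 2 (Im (k-1) I))) x :: real)"
      unfolding I third1 third2 ivl_pair by (rule ext) (auto simp: indicator_def)
    then show ?thesis by (simp only:) (intro good_add good_ivl)
  qed
  ultimately show ?thesis
    by (simp only:) (intro good_cmul good_add good_sum good_ivl; assumption?; simp)
qed

lemma good_F: "good (F k \<nu> \<omega> I)"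
proof (induction \<nu> arbitrary: \<omega> I)
  case 0
  have "F k 0 \<omega> I = (\<lambda>x. \<omega> / sqrt (pp k) * (uu k * indicator (ivl (lhalf I)) x + (1 / uu k) * indicator (ivl (rhalf I)) x))"
    by (rule ext) (simp add: F_0)
  then show ?case by (simp only:) (intro good_cmul good_add good_ivl)
next
  case (Suc \<nu>)
  show ?case unfolding F_Suc_fun by (intro good_add good_own good_sum) (auto intro: Suc.IH)
qed

context fixes k :: nat assumes k2: "k \<ge> 2" begin

lemma F_nonneg: "\<omega> \<ge> 0 \<Longrightarrow> 0 \<le> F k \<nu> \<omega> I x"
proof (induction \<nu> arbitrary: \<omega> I)
  case 0
  have "uu k > 0" "pp k > 0" using uu_pos[OF k2] pp_ge1[OF k2] by auto
  then show ?case using 0 by (simp add: F_0)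
next
  case (Suc \<nu>)
  have "pp k > 0" using pp_ge1[OF k2] by auto
  then have "own k \<omega> I x \<ge> 0" using Suc.prems eps_pos[of k] by (simp add: own_def sum_nonneg)
  moreover have "(\<Sum>m\<in>{0..k-2}. F k \<nu> (2*\<omega>) (third 2 (Im m I)) x) \<ge> 0"
    using Suc.prems by (intro sum_nonneg Suc.IH) simp
  ultimately show ?case by (simp add: F_Suc)
qed

lemma own_nonneg: "\<omega> \<ge> 0 \<Longrightarrow> 0 \<le> own k \<omega> I x"
proof -
  assume "\<omega> \<ge> 0"
  moreover have "pp k > 0" using pp_ge1[OF k2] by auto
  ultimately show ?thesis using eps_pos[of k] by (simp add: own_def sum_nonneg)
qed

lemma own_le: "\<omega> \<ge> 0 \<Longrightarrow> own k \<omega> I x \<le> 2 * \<omega>"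
proof -
  assume w: "\<omega> \<ge> 0"
  have p: "pp k > 0" using pp_ge1[OF k2] by auto
  have c: "4 * eps k / (1 + eps k) \<le> 1" "0 \<le> 4 * eps k / (1 + eps k)" using cc_bounds[OF k2] by auto
  have s: "(\<Sum>m\<in>{0..k-2}. indicator (ivl (third 1 (Im m I))) x) \<le> real (card {0..k-2}) * (1::real)"
    by (rule sum_bounded_above) (simp add: indicator_def)
  have cd: "real (card {0..k-2}) = real k - 1" using k2 by simp
  have i1: "indicator (ivl (third 1 (Im (k-1) I)) \<union> ivl (third 2 (Im (k-1) I))) x \<le> (1::real)"
    by (simp add: indicator_def)
  have i2: "4 * eps k / (1 + eps k) * indicator (ivl (third 3 (Im (k-1) I))) x \<le> (1::real)"
    using c by (simp add: indicator_def)
  have "(\<Sum>m\<in>{0..k-2}. indicator (ivl (third 1 (Im m I))) x)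
        + indicator (ivl (third 1 (Im (k-1) I)) \<union> ivl (third 2 (Im (k-1) I))) x
        + 4 * eps k / (1 + eps k) * indicator (ivl (third 3 (Im (k-1) I))) x \<le> real k + 1"
    using s cd i1 i2 by linarith
  then have "own k \<omega> I x \<le> \<omega> / pp k * (real k + 1)"
    unfolding own_def using w p by (intro mult_left_mono) auto
  also have "\<dots> = \<omega> * ((real k + 1) / pp k)" by simp
  also have "\<dots> \<le> \<omega> * 2" using kp[OF k2] w by (intro mult_left_mono) auto
  finally show ?thesis by simp
qed

lemma F0_le: "\<omega> \<ge> 0 \<Longrightarrow> F k 0 \<omega> I x \<le> 2 * \<omega>"
proof -
  assume w: "\<omega> \<ge> 0"
  have u: "uu k > 0" using uu_pos[OF k2] .
  have sp: "sqrt (pp k) > 0" using pp_ge1[OF k2] by simp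
  have "uu k * indicator (ivl (lhalf I)) x + (1 / uu k) * indicator (ivl (rhalf I)) x \<le> uu k + 1 / uu k"
    using u by (intro add_mono) (auto simp: indicator_def)
  then have "F k 0 \<omega> I x \<le> \<omega> / sqrt (pp k) * (uu k + 1 / uu k)"
    unfolding F_0 using w sp by (intro mult_left_mono) auto
  also have "\<dots> = \<omega> * ((uu k + 1 / uu k) / sqrt (pp k))" by simp
  also have "\<dots> = 2 * \<omega>" using uu_sum[OF k2] by simp
  finally show ?thesis .
qed

end



definition len :: "real \<Rightarrow> real \<Rightarrow> real \<Rightarrow> real \<Rightarrow> real" where
  "len c e x y = max 0 (min e y - max c x)"

lemma len_le: "x \<le> y \<Longrightarrow> len c e x y \<le> y - x" by (auto simp: len_def)
lemma len_nonneg: "len c e x y \<ge> 0" by (auto simp: len_def)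
lemma hi_ind': "((indicator {x..<y} :: real \<Rightarrow> real) has_integral len c e x y) {c..<e}"
  unfolding len_def by (rule hi_ind)

lemma sum_single: "finite A \<Longrightarrow> m \<in> A \<Longrightarrow> (\<And>m'. m' \<in> A \<Longrightarrow> m' \<noteq> m \<Longrightarrow> f m' = 0) \<Longrightarrow> sum f A = f m"
proof -
  assume A: "finite A" "m \<in> A" and z: "\<And>m'. m' \<in> A \<Longrightarrow> m' \<noteq> m \<Longrightarrow> f m' = 0"
  have "sum f A = f m + sum f (A - {m})" using A by (rule sum.remove)
  moreover have "sum f (A - {m}) = 0" using z by (intro sum.neutral) auto
  ultimately show ?thesis by simp
qed

lemma half_aux: "(t::real) \<le> y - (x+y)/2 \<Longrightarrow> t \<le> (y - x)/2" by (simp add: field_simps)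

context fixes k :: nat assumes k2: "k \<ge> 2" begin

lemma F_supp: "a < b \<Longrightarrow> x \<notin> {a..<b} \<Longrightarrow> F k \<nu> \<omega> (a,b) x = 0"
proof (induction \<nu> arbitrary: \<omega> a b)
  case 0
  then show ?case by (auto simp: F_0 lhalf_def rhalf_def indicator_def)
next
  case (Suc \<nu>)
  have r: "\<And>m. 0 < rr m a b \<and> 3 * rr m a b \<le> b - a" using Suc.prems rr_pos rr_le by auto
  have o: "own k \<omega> (a,b) x = 0"
  proof -
    have "\<And>m. indicator {b - 3 * rr m a b..<b - 2 * rr m a b} x = (0::real)"
    proof -
      fix m show "indicator {b - 3 * rr m a b..<b - 2 * rr m a b} x = (0::real)"
        using Suc.prems r[of m] by (auto simp: indicator_def)
    qed
    moreover have "indicator {b - 3 * rr (k-1) a b..<b - rr (k-1) a b} x = (0::real)"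
      using Suc.prems r[of "k-1"] by (auto simp: indicator_def)
    moreover have "indicator {b - rr (k-1) a b..<b} x = (0::real)"
      using Suc.prems r[of "k-1"] by (auto simp: indicator_def)
    ultimately show ?thesis using Suc.prems by (simp add: own_alt)
  qed
  have "\<And>m. F k \<nu> (2*\<omega>) (third 2 (Im m (a,b))) x = 0"
  proof -
    fix m
    show "F k \<nu> (2*\<omega>) (third 2 (Im m (a,b))) x = 0"
      unfolding third2 using Suc.prems r[of m] by (intro Suc.IH) auto
  qed
  then show ?case using o by (simp add: F_Suc)
qed

lemma own_child: "a < b \<Longrightarrow> m \<le> k - 2 \<Longrightarrow> x \<in> {b - 2 * rr m a b..<b - rr m a b} \<Longrightarrow> own k \<omega> (a,b) x = 0"
proof -
  assume ab: "a < b" and m: "m \<le> k - 2" and x: "x \<in> {b - 2 * rr m a b..<b - rr m a b}"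
  have rp: "\<And>j. rr j a b > 0" using ab rr_pos by auto
  have A: "\<And>j. indicator {b - 3 * rr j a b..<b - 2 * rr j a b} x = (0::real)"
  proof -
    fix j
    consider "j = m" | "j < m" | "m < j" by linarith
    then show "indicator {b - 3 * rr j a b..<b - 2 * rr j a b} x = (0::real)"
    proof cases
      case 1 then show ?thesis using x by (auto simp: indicator_def)
    next
      case 2 then have "3 * rr m a b \<le> rr j a b" using rr_mono ab by auto
      then show ?thesis using x rp[of m] by (auto simp: indicator_def)
    next
      case 3 then have "3 * rr j a b \<le> rr m a b" using rr_mono ab by auto
      then show ?thesis using x by (auto simp: indicator_def)
    qed
  qed
  have mk: "m < k - 1" using m k2 by linarith
  then have l: "3 * rr (k-1) a b \<le> rr m a b" using rr_mono ab by auto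
  have B: "indicator {b - 3 * rr (k-1) a b..<b - rr (k-1) a b} x = (0::real)"
    using x l by (auto simp: indicator_def)
  have C: "indicator {b - rr (k-1) a b..<b} x = (0::real)"
    using x l rp[of "k-1"] by (auto simp: indicator_def)
  show ?thesis unfolding own_alt[OF less_imp_le[OF ab]] A B C by simp
qed

lemma child_disj: "a < b \<Longrightarrow> m \<noteq> m' \<Longrightarrow> x \<in> {b - 2 * rr m a b..<b - rr m a b} \<Longrightarrow> x \<notin> {b - 2 * rr m' a b..<b - rr m' a b}"
proof -
  assume ab: "a < b" and mm: "m \<noteq> m'" and x: "x \<in> {b - 2 * rr m a b..<b - rr m a b}"
  have rp: "\<And>j. rr j a b > 0" using ab rr_pos by auto
  consider "m < m'" | "m' < m" using mm by linarith
  then show ?thesis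
  proof cases
    case 1 then have "3 * rr m' a b \<le> rr m a b" using rr_mono ab by auto
    then show ?thesis using x rp[of m] by auto
  next
    case 2 then have "3 * rr m a b \<le> rr m' a b" using rr_mono ab by auto
    then show ?thesis using x rp[of m'] by auto
  qed
qed

lemma F_in_child: "a < b \<Longrightarrow> m \<le> k - 2 \<Longrightarrow> x \<in> {b - 2 * rr m a b..<b - rr m a b} \<Longrightarrow>
   F k (Suc \<nu>) \<omega> (a,b) x = F k \<nu> (2*\<omega>) (third 2 (Im m (a,b))) x"
proof -
  assume ab: "a < b" and m: "m \<le> k - 2" and x: "x \<in> {b - 2 * rr m a b..<b - rr m a b}"
  have rp: "\<And>j. rr j a b > 0" using ab rr_pos by auto
  have "(\<Sum>m'\<in>{0..k-2}. F k \<nu> (2*\<omega>) (third 2 (Im m' (a,b))) x) = F k \<nu> (2*\<omega>) (third 2 (Im m (a,b))) x"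
  proof (rule sum_single)
    show "m \<in> {0..k-2}" using m by simp
    fix m' assume "m' \<in> {0..k-2}" "m' \<noteq> m"
    then have "x \<notin> {b - 2 * rr m' a b..<b - rr m' a b}" using child_disj[OF ab _ x] by metis
    then show "F k \<nu> (2*\<omega>) (third 2 (Im m' (a,b))) x = 0"
      unfolding third2 using rp[of m'] by (intro F_supp) auto
  qed simp
  then show ?thesis by (simp add: F_Suc own_child[OF ab m x])
qed

lemma int_own: "a \<le> b \<Longrightarrow> \<omega> \<ge> 0 \<Longrightarrow> integral {c..<e} (own k \<omega> (a,b)) \<le> \<omega> * (b - a) * (3 * eps k)"
proof -
  assume ab: "a \<le> b" and w: "\<omega> \<ge> 0"
  define cc where "cc = 4 * eps k / (1 + eps k)"
  define r where "r = (\<lambda>m. rr m a b)"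
  have rp: "\<And>j. r j \<ge> 0" using ab by (simp add: r_def rr_def)
  have feq: "own k \<omega> (a,b) = (\<lambda>x. \<omega> / pp k * ((\<Sum>m\<in>{0..k-2}. indicator {b - 3 * r m..<b - 2 * r m} x)
        + indicator {b - 3 * r (k-1)..<b - r (k-1)} x
        + cc * indicator {b - r (k-1)..<b} x))"
    using ab by (intro ext) (simp add: own_alt r_def cc_def)
  have hi: "(own k \<omega> (a,b) has_integral \<omega> / pp k * ((\<Sum>m\<in>{0..k-2}. len c e (b - 3 * r m) (b - 2 * r m))
        + len c e (b - 3 * r (k-1)) (b - r (k-1)) + cc * len c e (b - r (k-1)) b)) {c..<e}"
    unfolding feq
    by (intro has_integral_mult_right has_integral_add has_integral_sum hi_ind') auto
  have c: "0 \<le> cc" using cc_bounds[OF k2] by (simp add: cc_def)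
  have "(\<Sum>m\<in>{0..k-2}. len c e (b - 3 * r m) (b - 2 * r m)) \<le> (\<Sum>m\<in>{0..k-2}. r m)"
    using rp by (intro sum_mono) (smt (verit) len_le)
  moreover have "len c e (b - 3 * r (k-1)) (b - r (k-1)) \<le> 2 * r (k-1)"
    using rp[of "k-1"] len_le[of "b - 3 * r (k-1)" "b - r (k-1)" c e] by simp
  moreover have "cc * len c e (b - r (k-1)) b \<le> cc * r (k-1)"
    using rp[of "k-1"] len_le[of "b - r (k-1)" b c e] c by (intro mult_left_mono) auto
  ultimately have le: "(\<Sum>m\<in>{0..k-2}. len c e (b - 3 * r m) (b - 2 * r m))
        + len c e (b - 3 * r (k-1)) (b - r (k-1)) + cc * len c e (b - r (k-1)) b
        \<le> (\<Sum>m\<in>{0..k-2}. r m) + 2 * r (k-1) + cc * r (k-1)" by linarith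
  have sr: "(\<Sum>m\<in>{0..k-2}. r m) = (b - a) * ((1 - 3 * eps k)/2)"
  proof -
    have "(\<Sum>m\<in>{0..k-2}. r m) = (\<Sum>m\<in>{0..k-2}. (b - a) * (1 / 3^(Suc m)))"
      by (simp add: r_def rr_def)
    also have "\<dots> = (b - a) * (\<Sum>m\<in>{0..k-2}. 1 / 3^(Suc m))" by (simp add: sum_distrib_left)
    finally show ?thesis using geo_sum_k[OF k2] by simp
  qed
  have rl: "r (k-1) = (b - a) * eps k" using rr_last[of k a b] k2 by (simp add: r_def)
  have id: "(1 - 3 * eps k)/2 + 2 * eps k + cc * eps k = pp k * (3 * eps k)"
    unfolding pp_eq cc_def using eps_pos[of k] by (simp add: field_simps power2_eq_square)
  have "(\<Sum>m\<in>{0..k-2}. r m) + 2 * r (k-1) + cc * r (k-1) = (b - a) * (pp k * (3 * eps k))"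
    unfolding sr rl id[symmetric] by (simp add: algebra_simps)
  have p: "pp k > 0" using pp_ge1[OF k2] by simp
  have "integral {c..<e} (own k \<omega> (a,b)) = \<omega> / pp k * ((\<Sum>m\<in>{0..k-2}. len c e (b - 3 * r m) (b - 2 * r m))
        + len c e (b - 3 * r (k-1)) (b - r (k-1)) + cc * len c e (b - r (k-1)) b)"
    using hi integral_unique by blast
  also have "\<dots> \<le> \<omega> / pp k * ((\<Sum>m\<in>{0..k-2}. r m) + 2 * r (k-1) + cc * r (k-1))"
    using le w p by (intro mult_left_mono) auto
  also have "\<dots> = \<omega> / pp k * ((b - a) * (pp k * (3 * eps k)))"
    using \<open>(\<Sum>m\<in>{0..k-2}. r m) + 2 * r (k-1) + cc * r (k-1) = (b - a) * (pp k * (3 * eps k))\<close> by simp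
  also have "\<dots> = \<omega> * (b - a) * (3 * eps k)" using p by simp
  finally show ?thesis .
qed

lemma sum_rr: "a \<le> b \<Longrightarrow> (\<Sum>m\<in>{0..k-2}. rr m a b) = (b - a) * ((1 - 3 * eps k)/2)"
proof -
  assume ab: "a \<le> b"
  have "(\<Sum>m\<in>{0..k-2}. rr m a b) = (\<Sum>m\<in>{0..k-2}. (b - a) * (1 / 3^(Suc m)))"
    by (simp add: rr_def)
  also have "\<dots> = (b - a) * (\<Sum>m\<in>{0..k-2}. 1 / 3^(Suc m))" by (simp add: sum_distrib_left)
  finally show ?thesis using geo_sum_k[OF k2] by simp
qed

lemma mass: "a < b \<Longrightarrow> \<omega> \<ge> 0 \<Longrightarrow> integral {c..<e} (F k \<nu> \<omega> (a,b)) \<le> \<omega> * (b - a)"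
proof (induction \<nu> arbitrary: \<omega> a b)
  case 0
  have u: "uu k > 0" using uu_pos[OF k2] .
  have sp: "sqrt (pp k) > 0" using pp_ge1[OF k2] by simp
  have feq: "F k 0 \<omega> (a,b) = (\<lambda>x. \<omega> / sqrt (pp k) * (uu k * indicator {a..<(a+b)/2} x + (1 / uu k) * indicator {(a+b)/2..<b} x))"
    by (intro ext) (simp add: F_0 lhalf_def rhalf_def)
  have hi: "(F k 0 \<omega> (a,b) has_integral \<omega> / sqrt (pp k) * (uu k * len c e a ((a+b)/2) + (1 / uu k) * len c e ((a+b)/2) b)) {c..<e}"
    unfolding feq by (intro has_integral_mult_right has_integral_add hi_ind')
  have l1: "len c e a ((a+b)/2) \<le> (b - a)/2" using len_le[of a "(a+b)/2" c e] 0 by simp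
  have l2': "len c e ((a+b)/2) b \<le> b - (a+b)/2" using 0 by (intro len_le) simp
  have l2: "len c e ((a+b)/2) b \<le> (b - a)/2" using half_aux[OF l2'] .
  have "uu k * len c e a ((a+b)/2) + (1 / uu k) * len c e ((a+b)/2) b \<le> uu k * ((b-a)/2) + (1 / uu k) * ((b-a)/2)"
    using u l1 l2 by (intro add_mono mult_left_mono) auto
  then have "integral {c..<e} (F k 0 \<omega> (a,b)) \<le> \<omega> / sqrt (pp k) * (uu k * ((b-a)/2) + (1 / uu k) * ((b-a)/2))"
    using hi integral_unique 0 sp by (metis divide_nonneg_pos mult_left_mono)
  also have "\<dots> = \<omega> * ((uu k + 1 / uu k) / sqrt (pp k)) * ((b - a)/2)" using u sp by (simp add: field_simps)
  also have "\<dots> = \<omega> * (b - a)" using uu_sum[OF k2] by simp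
  finally show ?case .
next
  case (Suc \<nu>)
  have ab: "a < b" and w: "\<omega> \<ge> 0" using Suc.prems by auto
  have "integral {c..<e} (F k (Suc \<nu>) \<omega> (a,b)) = integral {c..<e} (own k \<omega> (a,b))
          + (\<Sum>m\<in>{0..k-2}. integral {c..<e} (F k \<nu> (2*\<omega>) (third 2 (Im m (a,b)))))"
    unfolding F_Suc_fun
    by (subst integral_add) (auto intro!: good_int good_own good_F good_sum integral_sum)
  also have "\<dots> \<le> \<omega> * (b - a) * (3 * eps k) + (\<Sum>m\<in>{0..k-2}. 2 * \<omega> * rr m a b)"
  proof (intro add_mono sum_mono)
    show "integral {c..<e} (own k \<omega> (a,b)) \<le> \<omega> * (b - a) * (3 * eps k)"
      using int_own ab w by simp
    fix m
    have "integral {c..<e} (F k \<nu> (2*\<omega>) (b - 2 * rr m a b, b - rr m a b)) \<le> 2 * \<omega> * ((b - rr m a b) - (b - 2 * rr m a b))"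
      using rr_pos[OF ab, of m] w by (intro Suc.IH) auto
    then show "integral {c..<e} (F k \<nu> (2*\<omega>) (third 2 (Im m (a,b)))) \<le> 2 * \<omega> * rr m a b"
      by (simp add: third2)
  qed
  also have "\<dots> = \<omega> * (b - a) * (3 * eps k) + 2 * \<omega> * ((b - a) * ((1 - 3 * eps k)/2))"
    using sum_rr[of a b] ab by (simp add: sum_distrib_left[symmetric])
  also have "\<dots> = \<omega> * (b - a)" by (simp add: field_simps)
  finally show ?case .
qed

end



lemma int_restrict: "(\<And>x. x \<notin> {\<alpha>..<\<beta>} \<Longrightarrow> f x = 0) \<Longrightarrow>
   integral {c..<e} f = integral {max c \<alpha>..<min e \<beta>} (f::real \<Rightarrow> real)"
proof -
  assume z: "\<And>x. x \<notin> {\<alpha>..<\<beta>} \<Longrightarrow> f x = 0"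
  have "integral {c..<e} f = integral {c..<e} (\<lambda>x. if x \<in> {\<alpha>..<\<beta>} then f x else 0)"
    using z by (intro integral_cong) auto
  also have "\<dots> = integral ({\<alpha>..<\<beta>} \<inter> {c..<e}) f" by (rule integral_restrict_Int)
  also have "{\<alpha>..<\<beta>} \<inter> {c..<e} = {max c \<alpha>..<min e \<beta>}" by auto
  finally show ?thesis .
qed

lemma int_zero: "(\<And>x. x \<in> {c..<e} \<Longrightarrow> f x = 0) \<Longrightarrow> integral {c..<e} f = (0::real)"
proof -
  assume "\<And>x. x \<in> {c..<e} \<Longrightarrow> f x = 0"
  then have "integral {c..<e} f = integral {c..<e} (\<lambda>x. 0::real)" by (intro integral_cong) auto
  then show ?thesis by simp
qed

lemma int_le_const: "good f \<Longrightarrow> c \<le> e \<Longrightarrow> (\<And>x. x \<in> {c..<e} \<Longrightarrow> f x \<le> C) \<Longrightarrow> integral {c..<e} f \<le> C * (e - c)"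
proof -
  assume g: "good f" and ce: "c \<le> e" and le: "\<And>x. x \<in> {c..<e} \<Longrightarrow> f x \<le> C"
  have "integral {c..<e} f \<le> integral {c..<e} (\<lambda>x. C * 1)"
  proof (intro integral_le)
    show "f integrable_on {c..<e}" using g by (simp add: good_def)
    show "(\<lambda>x. C * 1) integrable_on {c..<e}" using integrable_cmul[OF integrable_one[of c e], of C] by simp
  qed (use le in auto)
  also have "\<dots> = C * integral {c..<e} (\<lambda>x. 1)" by (rule int_cmul)
  also have "\<dots> = C * (e - c)" using int_one[OF ce] by simp
  finally show ?thesis .
qed

lemma per_child:
  assumes ab: "\<alpha> < \<beta>" and g: "good f"
    and z: "\<And>x. x \<notin> {\<alpha>..<\<beta>} \<Longrightarrow> f x = 0"
    and PS: "\<And>s t. \<alpha> \<le> s \<Longrightarrow> s < t \<Longrightarrow> t \<le> \<beta> \<Longrightarrow> s = \<alpha> \<or> t = \<beta> \<Longrightarrow> integral {s..<t} f \<le> C * (t - s)"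
    and C: "C \<ge> 0" and ce: "c < e" and nc: "\<not> (\<alpha> \<le> c \<and> e \<le> \<beta>)"
  shows "integral {c..<e} f \<le> C * integral {c..<e} (indicator {\<alpha>..<\<beta>})"
proof -
  have ii: "integral {c..<e} (indicator {\<alpha>..<\<beta>} :: real \<Rightarrow> real) = max 0 (min e \<beta> - max c \<alpha>)"
    by (rule int_ind)
  have r: "integral {c..<e} f = integral {max c \<alpha>..<min e \<beta>} f" using z by (rule int_restrict)
  show ?thesis
  proof (cases "max c \<alpha> < min e \<beta>")
    case True
    have "integral {max c \<alpha>..<min e \<beta>} f \<le> C * (min e \<beta> - max c \<alpha>)"
      using True nc by (intro PS) auto
    then show ?thesis unfolding r ii using True by simp
  next
    case False
    then have "integral {max c \<alpha>..<min e \<beta>} f = 0" by (intro int_zero) auto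
    then show ?thesis unfolding r ii using C by simp
  qed
qed

context fixes k :: nat assumes k2: "k \<ge> 2" begin

lemma own_plus: "a < b \<Longrightarrow> \<omega> \<ge> 0 \<Longrightarrow> B \<ge> 2 * \<omega> \<Longrightarrow>
  own k \<omega> (a,b) x + B * (\<Sum>m\<in>{0..k-2}. indicator {b - 2 * rr m a b..<b - rr m a b} x) \<le> B"
proof -
  assume ab: "a < b" and w: "\<omega> \<ge> 0" and B: "B \<ge> 2 * \<omega>"
  show ?thesis
  proof (cases "\<exists>m\<in>{0..k-2}. x \<in> {b - 2 * rr m a b..<b - rr m a b}")
    case True
    then obtain m where m: "m \<in> {0..k-2}" "x \<in> {b - 2 * rr m a b..<b - rr m a b}" by blast
    have "(\<Sum>m\<in>{0..k-2}. indicator {b - 2 * rr m a b..<b - rr m a b} x) = (indicator {b - 2 * rr m a b..<b - rr m a b} x :: real)"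
    proof (rule sum_single)
      fix m' assume "m' \<in> {0..k-2}" "m' \<noteq> m"
      then show "indicator {b - 2 * rr m' a b..<b - rr m' a b} x = (0::real)"
        using child_disj[OF k2 ab _ m(2)] by (auto simp: indicator_def)
    qed (use m in auto)
    then show ?thesis using own_child[OF k2 ab _ m(2)] m by simp
  next
    case False
    then have "(\<Sum>m\<in>{0..k-2}. indicator {b - 2 * rr m a b..<b - rr m a b} x) = (0::real)"
      by (intro sum.neutral) (auto simp: indicator_def)
    then show ?thesis using own_le[OF k2 w, of "(a,b)" x] B by simp
  qed
qed

lemma int_split: "integral {c..<e} (F k (Suc \<nu>) \<omega> (a,b)) = integral {c..<e} (own k \<omega> (a,b))
          + (\<Sum>m\<in>{0..k-2}. integral {c..<e} (F k \<nu> (2*\<omega>) (b - 2 * rr m a b, b - rr m a b)))"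
  unfolding F_Suc_fun third2
  by (subst integral_add) (auto intro!: good_int good_own good_F good_sum integral_sum)

lemma int_own_ind: "c \<le> e \<Longrightarrow> a < b \<Longrightarrow> \<omega> \<ge> 0 \<Longrightarrow> B \<ge> 2 * \<omega> \<Longrightarrow>
   integral {c..<e} (own k \<omega> (a,b)) + B * (\<Sum>m\<in>{0..k-2}. integral {c..<e} (indicator {b - 2 * rr m a b..<b - rr m a b}))
   \<le> B * (e - c)"
proof -
  assume ce: "c \<le> e" and ab: "a < b" and w: "\<omega> \<ge> 0" and B: "B \<ge> 2 * \<omega>"
  have g: "good (\<lambda>x. own k \<omega> (a,b) x + B * (\<Sum>m\<in>{0..k-2}. indicator {b - 2 * rr m a b..<b - rr m a b} x))"
    by (intro good_add good_own good_cmul good_sum good_ind) auto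
  have "integral {c..<e} (\<lambda>x. own k \<omega> (a,b) x + B * (\<Sum>m\<in>{0..k-2}. indicator {b - 2 * rr m a b..<b - rr m a b} x))
     = integral {c..<e} (own k \<omega> (a,b)) + B * (\<Sum>m\<in>{0..k-2}. integral {c..<e} (indicator {b - 2 * rr m a b..<b - rr m a b}))"
    apply (subst integral_add)
      apply (rule good_int, rule good_own)
     apply (rule good_int, intro good_cmul good_sum good_ind, simp)
    apply (simp add: int_cmul)
    apply (subst integral_sum)
      apply (auto intro: good_int good_ind)
    done
  moreover have "integral {c..<e} (\<lambda>x. own k \<omega> (a,b) x + B * (\<Sum>m\<in>{0..k-2}. indicator {b - 2 * rr m a b..<b - rr m a b} x)) \<le> B * (e - c)"
    using g ce own_plus[OF ab w B] by (intro int_le_const) auto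
  ultimately show ?thesis by simp
qed

lemma PS: "a < b \<Longrightarrow> \<omega> \<ge> 0 \<Longrightarrow> a \<le> s \<Longrightarrow> s < t \<Longrightarrow> t \<le> b \<Longrightarrow> s = a \<or> t = b \<Longrightarrow>
  integral {s..<t} (F k \<nu> \<omega> (a,b)) \<le> 4 * \<omega> * (t - s)"
proof (induction \<nu> arbitrary: \<omega> a b s t)
  case 0
  have "integral {s..<t} (F k 0 \<omega> (a,b)) \<le> (2 * \<omega>) * (t - s)"
    using 0 F0_le[OF k2] by (intro int_le_const good_F) auto
  moreover have "(2 * \<omega>) * (t - s) \<le> (4 * \<omega>) * (t - s)" using 0 by (intro mult_right_mono) auto
  ultimately show ?case by simp
next
  case (Suc \<nu>)
  note ab = \<open>a < b\<close> and w = \<open>\<omega> \<ge> 0\<close>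
  define r where "r = (\<lambda>m. rr m a b)"
  have rp: "\<And>m. 0 < r m" and r3: "\<And>m. 3 * r m \<le> b - a" using ab rr_pos rr_le by (auto simp: r_def)
  define P where "P = (\<lambda>m. (b - 2 * r m < s \<and> s < b - r m) \<or> (b - 2 * r m < t \<and> t < b - r m))"
  define z where "z = (if s = a then t else s)"
  have Pz: "\<And>m. P m \<Longrightarrow> z \<in> {b - 2 * r m..<b - r m} \<and> r m \<le> t - s"
  proof -
    fix m assume Pm: "P m"
    show "z \<in> {b - 2 * r m..<b - r m} \<and> r m \<le> t - s"
    proof (cases "s = a")
      case True
      then have "b - 2 * r m < t \<and> t < b - r m" using Pm r3[of m] rp[of m] unfolding P_def by auto
      then show ?thesis using True r3[of m] unfolding z_def by auto
    next
      case False
      then have tb: "t = b" using Suc.prems by auto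
      then have "b - 2 * r m < s \<and> s < b - r m" using Pm rp[of m] unfolding P_def by auto
      then show ?thesis using False tb unfolding z_def by auto
    qed
  qed
  have child: "integral {s..<t} (F k \<nu> (2*\<omega>) (b - 2 * r m, b - r m))
      \<le> 2 * \<omega> * integral {s..<t} (indicator {b - 2 * r m..<b - r m}) + (if P m then 2 * \<omega> * r m else 0)" for m
  proof -
    have mass_m: "integral {s..<t} (F k \<nu> (2*\<omega>) (b - 2 * r m, b - r m)) \<le> 2 * \<omega> * r m"
      using mass[OF k2, of "b - 2 * r m" "b - r m" "2*\<omega>" s t \<nu>] rp[of m] w by simp
    have ind: "integral {s..<t} (indicator {b - 2 * r m..<b - r m} :: real \<Rightarrow> real) = len s t (b - 2 * r m) (b - r m)"
      unfolding len_def by (rule int_ind)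
    have i0: "0 \<le> 2 * \<omega> * integral {s..<t} (indicator {b - 2 * r m..<b - r m} :: real \<Rightarrow> real)"
      unfolding ind using w len_nonneg by simp
    show ?thesis
    proof (cases "P m")
      case True then show ?thesis using mass_m i0 by simp
    next
      case False
      then have nP: "(s \<le> b - 2 * r m \<or> s \<ge> b - r m) \<and> (t \<le> b - 2 * r m \<or> t \<ge> b - r m)"
        unfolding P_def by auto
      show ?thesis
      proof (cases "s \<le> b - 2 * r m \<and> t \<ge> b - r m")
        case True
        then have "len s t (b - 2 * r m) (b - r m) = r m" using rp[of m] by (auto simp: len_def)
        then show ?thesis using mass_m False ind by simp
      next
        case False
        then have "\<And>x. x \<in> {s..<t} \<Longrightarrow> x \<notin> {b - 2 * r m..<b - r m}" using nP \<open>s < t\<close> by auto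
        then have "integral {s..<t} (F k \<nu> (2*\<omega>) (b - 2 * r m, b - r m)) = 0"
          using rp[of m] by (intro int_zero F_supp[OF k2]) auto
        then show ?thesis using i0 \<open>\<not> P m\<close> by simp
      qed
    qed
  qed
  have psum: "(\<Sum>m\<in>{0..k-2}. if P m then 2 * \<omega> * r m else 0) \<le> 2 * \<omega> * (t - s)"
  proof (cases "\<exists>m\<in>{0..k-2}. P m")
    case True
    then obtain m where m: "m \<in> {0..k-2}" "P m" by blast
    have "(\<Sum>m\<in>{0..k-2}. if P m then 2 * \<omega> * r m else 0) = (if P m then 2 * \<omega> * r m else 0)"
    proof (rule sum_single)
      fix m' assume m': "m' \<in> {0..k-2}" "m' \<noteq> m"
      show "(if P m' then 2 * \<omega> * r m' else 0) = 0"
      proof (rule ccontr)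
        assume "(if P m' then 2 * \<omega> * r m' else 0) \<noteq> 0"
        then have "P m'" by (auto split: if_splits)
        then have "z \<in> {b - 2 * rr m' a b..<b - rr m' a b}" using Pz unfolding r_def by blast
        moreover have "z \<in> {b - 2 * rr m a b..<b - rr m a b}" using Pz m(2) unfolding r_def by blast
        ultimately show False using child_disj[OF k2 ab m'(2)] by blast
      qed
    qed (use m in auto)
    then show ?thesis using m Pz[of m] w by (simp add: mult_left_mono)
  next
    case False
    then have "(\<Sum>m\<in>{0..k-2}. if P m then 2 * \<omega> * r m else 0) = 0" by (intro sum.neutral) auto
    then show ?thesis using w \<open>s < t\<close> by simp
  qed
  have "integral {s..<t} (F k (Suc \<nu>) \<omega> (a,b)) = integral {s..<t} (own k \<omega> (a,b))
          + (\<Sum>m\<in>{0..k-2}. integral {s..<t} (F k \<nu> (2*\<omega>) (b - 2 * r m, b - r m)))"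
    unfolding r_def by (rule int_split)
  also have "\<dots> \<le> integral {s..<t} (own k \<omega> (a,b))
          + (\<Sum>m\<in>{0..k-2}. 2 * \<omega> * integral {s..<t} (indicator {b - 2 * r m..<b - r m}) + (if P m then 2 * \<omega> * r m else 0))"
    by (intro add_left_mono sum_mono child)
  also have "\<dots> = (integral {s..<t} (own k \<omega> (a,b))
          + 2 * \<omega> * (\<Sum>m\<in>{0..k-2}. integral {s..<t} (indicator {b - 2 * r m..<b - r m})))
          + (\<Sum>m\<in>{0..k-2}. if P m then 2 * \<omega> * r m else 0)"
    by (simp add: sum.distrib sum_distrib_left)
  also have "\<dots> \<le> 2 * \<omega> * (t - s) + 2 * \<omega> * (t - s)"
    using int_own_ind[of s t a b \<omega> "2*\<omega>"] Suc.prems psum unfolding r_def by (intro add_mono) auto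
  finally show ?case by simp
qed

lemma node: "a < b \<Longrightarrow> \<omega> \<ge> 0 \<Longrightarrow> c < e \<Longrightarrow>
  (\<And>m. m \<le> k - 2 \<Longrightarrow> \<not> (b - 2 * rr m a b \<le> c \<and> e \<le> b - rr m a b)) \<Longrightarrow>
  integral {c..<e} (F k (Suc \<nu>) \<omega> (a,b)) \<le> 8 * \<omega> * (e - c)"
proof -
  assume ab: "a < b" and w: "\<omega> \<ge> 0" and ce: "c < e"
    and nc: "\<And>m. m \<le> k - 2 \<Longrightarrow> \<not> (b - 2 * rr m a b \<le> c \<and> e \<le> b - rr m a b)"
  define r where "r = (\<lambda>m. rr m a b)"
  have rp: "\<And>m. 0 < r m" using ab rr_pos by (auto simp: r_def)
  have child: "integral {c..<e} (F k \<nu> (2*\<omega>) (b - 2 * r m, b - r m))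
      \<le> 8 * \<omega> * integral {c..<e} (indicator {b - 2 * r m..<b - r m})" if m: "m \<in> {0..k-2}" for m
  proof (rule per_child)
    show "b - 2 * r m < b - r m" using rp[of m] by simp
    show "good (F k \<nu> (2 * \<omega>) (b - 2 * r m, b - r m))" by (rule good_F)
    show "\<And>x. x \<notin> {b - 2 * r m..<b - r m} \<Longrightarrow> F k \<nu> (2 * \<omega>) (b - 2 * r m, b - r m) x = 0"
      using rp[of m] by (intro F_supp[OF k2]) auto
    show "integral {s..<t} (F k \<nu> (2 * \<omega>) (b - 2 * r m, b - r m)) \<le> 8 * \<omega> * (t - s)"
      if "b - 2 * r m \<le> s" "s < t" "t \<le> b - r m" "s = b - 2 * r m \<or> t = b - r m" for s t
      using PS[of "b - 2 * r m" "b - r m" "2*\<omega>" s t \<nu>] that rp[of m] w by simp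
    show "0 \<le> 8 * \<omega>" using w by simp
    show "c < e" by fact
    show "\<not> (b - 2 * r m \<le> c \<and> e \<le> b - r m)" using nc m unfolding r_def by auto
  qed
  have "integral {c..<e} (F k (Suc \<nu>) \<omega> (a,b)) = integral {c..<e} (own k \<omega> (a,b))
          + (\<Sum>m\<in>{0..k-2}. integral {c..<e} (F k \<nu> (2*\<omega>) (b - 2 * r m, b - r m)))"
    unfolding r_def by (rule int_split)
  also have "\<dots> \<le> integral {c..<e} (own k \<omega> (a,b))
          + (\<Sum>m\<in>{0..k-2}. 8 * \<omega> * integral {c..<e} (indicator {b - 2 * r m..<b - r m}))"
    by (intro add_left_mono sum_mono child)
  also have "\<dots> = integral {c..<e} (own k \<omega> (a,b))
          + 8 * \<omega> * (\<Sum>m\<in>{0..k-2}. integral {c..<e} (indicator {b - 2 * r m..<b - r m}))"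
    by (simp add: sum_distrib_left)
  also have "\<dots> \<le> 8 * \<omega> * (e - c)"
    using int_own_ind[of c e a b \<omega> "8*\<omega>"] ab w ce unfolding r_def by auto
  finally show ?thesis .
qed

end



lemma third_shift: "third i (Im m (a + t, b + t)) = (fst (third i (Im m (a,b))) + t, snd (third i (Im m (a,b))) + t)"
  by (simp add: third_def Im_def algebra_simps)

lemma ind_shift: "indicator (ivl (\<alpha> + t, \<beta> + t)) (x + t) = (indicator (ivl (\<alpha>, \<beta>)) x :: real)"
  by (simp add: indicator_def)

lemma ind_shift_pair: "indicator (ivl (fst P + t, snd P + t)) (x + t) = (indicator (ivl P) x :: real)"
  by (cases P) (simp add: indicator_def)

lemma wfun_shift: "wfun k \<nu> \<omega> \<sigma> (a + t, b + t) (x + t) = wfun k \<nu> \<omega> \<sigma> (a, b) x"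
proof (induction \<nu> arbitrary: \<omega> \<sigma> a b)
  case 0
  have "lhalf (a + t, b + t) = (fst (lhalf (a,b)) + t, snd (lhalf (a,b)) + t)"
       "rhalf (a + t, b + t) = (fst (rhalf (a,b)) + t, snd (rhalf (a,b)) + t)"
    by (simp_all add: lhalf_def rhalf_def field_simps)
  then show ?case by (simp only: wfun.simps ind_shift_pair)
next
  case (Suc \<nu>)
  have u: "indicator (ivl (third 1 (Im (k-1) (a+t,b+t))) \<union> ivl (third 2 (Im (k-1) (a+t,b+t)))) (x + t)
     = (indicator (ivl (third 1 (Im (k-1) (a,b))) \<union> ivl (third 2 (Im (k-1) (a,b)))) x :: real)"
    unfolding third_shift by (simp add: indicator_def ivl_def)
  have c: "\<And>m. wfun k \<nu> (2*\<omega>) (\<sigma>/2) (third 2 (Im m (a+t,b+t))) (x + t) = wfun k \<nu> (2*\<omega>) (\<sigma>/2) (third 2 (Im m (a,b))) x"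
    unfolding third_shift using Suc.IH by simp
  show ?case by (simp only: wfun.simps) (simp only: u c, simp only: third_shift ind_shift_pair)
qed

lemma wper_F: "wper k x = F k (nn k) 1 (of_int \<lfloor>x\<rfloor>, of_int \<lfloor>x\<rfloor> + 1) x"
proof -
  have "wper k x = wfun k (nn k) 1 (pp k) (0 + of_int \<lfloor>x\<rfloor>, 1 + of_int \<lfloor>x\<rfloor>) (frac x + of_int \<lfloor>x\<rfloor>)"
    unfolding wper_def by (rule wfun_shift[symmetric])
  also have "\<dots> = wfun k (nn k) 1 (pp k) (of_int \<lfloor>x\<rfloor>, of_int \<lfloor>x\<rfloor> + 1) x"
    by (simp add: frac_def add.commute)
  finally show ?thesis by (simp add: F_def wfun_sigma[where \<sigma>="pp k" and \<sigma>'=1])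
qed

context fixes k :: nat assumes k2: "k \<ge> 2" begin

lemma wper_nonneg: "wper k x \<ge> 0"
  unfolding wper_F by (rule F_nonneg[OF k2]) simp

lemma carrier_link: "I \<in> carriers k d \<Longrightarrow> d \<le> nn k \<Longrightarrow>
   fst I < snd I \<and> (\<forall>x \<in> ivl I. wper k x = F k (nn k - d) (2^d) I x)"
proof (induction d arbitrary: I)
  case 0
  then obtain j :: int where I: "I = (of_int j, of_int j + 1)" by auto
  have "\<forall>x \<in> ivl I. wper k x = F k (nn k) 1 I x"
  proof
    fix x assume "x \<in> ivl I"
    then have "\<lfloor>x\<rfloor> = j" unfolding I by (simp add: floor_eq_iff)
    then show "wper k x = F k (nn k) 1 I x" unfolding I by (simp add: wper_F)
  qed
  then show ?case using I by simp
next
  case (Suc d)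
  from Suc.prems(1) obtain J m where J: "I = third 2 (Im m J)" "J \<in> carriers k d" "m \<le> k - 2" by auto
  obtain a b where ab0: "J = (a,b)" by (cases J)
  have IH: "a < b \<and> (\<forall>x \<in> {a..<b}. wper k x = F k (nn k - d) (2^d) (a,b) x)"
    using Suc.IH[OF J(2)] Suc.prems(2) ab0 by simp
  then have ab: "a < b" by simp
  have rp: "rr m a b > 0" and r3: "3 * rr m a b \<le> b - a" using rr_pos[OF ab] rr_le[of a b m] ab by auto
  have Ieq: "I = (b - 2 * rr m a b, b - rr m a b)" using J(1) ab0 third2 by simp
  have nd: "nn k - d = Suc (nn k - Suc d)" using Suc.prems(2) by simp
  have "\<forall>x \<in> ivl I. wper k x = F k (nn k - Suc d) (2^Suc d) I x"
  proof
    fix x assume x: "x \<in> ivl I"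
    then have xI: "x \<in> {b - 2 * rr m a b..<b - rr m a b}" using Ieq by simp
    then have "x \<in> {a..<b}" using rp r3 by auto
    then have "wper k x = F k (Suc (nn k - Suc d)) (2^d) (a,b) x" using IH nd by simp
    also have "\<dots> = F k (nn k - Suc d) (2 * 2^d) (third 2 (Im m (a,b))) x"
      by (rule F_in_child[OF k2 ab J(3) xI])
    finally show "wper k x = F k (nn k - Suc d) (2^Suc d) I x" using J(1) ab0 by simp
  qed
  then show ?case using Ieq rp by simp
qed

lemma suppw_eq: "\<nu> \<le> nn k \<Longrightarrow> suppw k \<nu> = (\<Union>I\<in>carriers k (nn k - \<nu>). ivl I)"
  by (simp add: suppw_def)

lemma wt_ge: "I \<in> carriers k d \<Longrightarrow> d \<le> nn k \<Longrightarrow> x \<in> ivl I \<Longrightarrow> wtilde k x \<ge> 2^(d+1)"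
proof -
  assume I: "I \<in> carriers k d" and dn: "d \<le> nn k" and x: "x \<in> ivl I"
  define n where "n = nn k"
  define S where "S = (\<lambda>d'. \<Union>I\<in>carriers k d'. ivl I)"
  define D where "D = {d'. d' \<le> n \<and> x \<in> S d'}"
  have fin: "finite D" unfolding D_def by simp
  have dD: "d \<in> D" using I dn x unfolding D_def S_def n_def by auto
  define dm where "dm = Max D"
  have dm: "dm \<in> D" "d \<le> dm" using fin dD unfolding dm_def by (auto intro: Max_in Max_ge)
  have mx: "\<And>d'. d' \<le> n \<Longrightarrow> x \<in> S d' \<Longrightarrow> d' \<le> dm" using fin unfolding dm_def D_def by (auto intro: Max_ge)
  have supp: "\<And>d'. d' \<le> n \<Longrightarrow> suppw k (n - d') = S d'"
    unfolding S_def n_def suppw_def by (simp add: diff_diff_cancel)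
  have terms_nn: "\<And>l. 0 \<le> (2::real)^l * indicator (suppw k (n - (l - 1)) - suppw k (n - l)) x"
    by simp
  have sum_nn: "0 \<le> (\<Sum>l\<in>{1..n}. (2::real)^l * indicator (suppw k (n - (l - 1)) - suppw k (n - l)) x)"
    by (intro sum_nonneg) simp
  have pw: "(2::real)^(d+1) \<le> 2^(dm+1)" using dm(2) by (intro power_increasing) auto
  show ?thesis
  proof (cases "dm = n")
    case True
    then have "x \<in> suppw k 0" using dm(1) supp[of n] unfolding D_def by simp
    then have wn: "wtilde k x \<ge> 2^(n+1)" unfolding wtilde_def n_def[symmetric] using sum_nn by simp
    show ?thesis using order_trans[OF pw[unfolded True] wn] .
  next
    case False
    then have dmn: "dm < n" using dm(1) unfolding D_def by auto
    have l: "dm + 1 \<in> {1..n}" using dmn by simp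
    have "x \<in> S dm" "x \<notin> S (dm + 1)" using dm(1) mx[of "dm+1"] dmn unfolding D_def by auto
    then have "x \<in> suppw k (n - ((dm + 1) - 1)) - suppw k (n - (dm + 1))"
      using supp[of dm] supp[of "dm+1"] dmn by simp
    then have "(2::real)^(dm+1) = 2^(dm+1) * indicator (suppw k (n - ((dm + 1) - 1)) - suppw k (n - (dm + 1))) x"
      by simp
    also have "\<dots> \<le> (\<Sum>l\<in>{1..n}. (2::real)^l * indicator (suppw k (n - (l - 1)) - suppw k (n - l)) x)"
      by (rule member_le_sum[OF l]) (auto simp: terms_nn)
    also have "\<dots> \<le> wtilde k x" unfolding wtilde_def n_def by simp
    finally have wn: "(2::real)^(dm+1) \<le> wtilde k x" .
    show ?thesis using order_trans[OF pw wn] .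
  qed
qed

end



lemma mem_unit: "x \<in> {of_int j..<of_int j + 1} \<longleftrightarrow> \<lfloor>x\<rfloor> = j"
  by (simp add: floor_eq_iff)

context fixes k :: nat assumes k2: "k \<ge> 2" begin

lemma descent: "\<forall>d I c e x. d + \<nu> = nn k \<longrightarrow> I \<in> carriers k d \<longrightarrow> fst I \<le> c \<longrightarrow> c < e \<longrightarrow> e \<le> snd I
   \<longrightarrow> c \<le> x \<longrightarrow> x < e \<longrightarrow> integral {c..<e} (wper k) \<le> 9/2 * wtilde k x * (e - c)"
proof (induction \<nu>)
  case 0
  show ?case
  proof (intro allI impI)
    fix d I c e x
    assume d: "d + 0 = nn k" and I: "I \<in> carriers k d" and ce: "fst I \<le> c" "c < e" "e \<le> snd I" and x: "c \<le> x" "x < e"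
    have L: "fst I < snd I \<and> (\<forall>x \<in> ivl I. wper k x = F k (nn k - d) (2^d) I x)"
      using carrier_link[OF k2 I] d by simp
    have "integral {c..<e} (wper k) = integral {c..<e} (F k 0 (2^d) I)"
      using L ce d by (intro integral_cong) (auto simp: ivl_def)
    also have "\<dots> \<le> (2 * 2^d) * (e - c)"
      using ce by (intro int_le_const good_F F0_le[OF k2]) auto
    also have "\<dots> \<le> wtilde k x * (e - c)"
    proof -
      have "wtilde k x \<ge> 2^(d+1)" using wt_ge[OF k2 I] d ce x by (auto simp: ivl_def)
      then show ?thesis using ce by (intro mult_right_mono) auto
    qed
    also have "\<dots> \<le> 9/2 * wtilde k x * (e - c)"
    proof -
      have "wtilde k x \<ge> 2^(d+1)" using wt_ge[OF k2 I] d ce x by (auto simp: ivl_def)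
      then have "wtilde k x \<ge> 0" by (smt (verit) zero_le_power)
      then show ?thesis using ce by (intro mult_right_mono) auto
    qed
    finally show "integral {c..<e} (wper k) \<le> 9/2 * wtilde k x * (e - c)" .
  qed
next
  case (Suc \<nu>)
  show ?case
  proof (intro allI impI)
    fix d I c e x
    assume d: "d + Suc \<nu> = nn k" and I: "I \<in> carriers k d" and ce: "fst I \<le> c" "c < e" "e \<le> snd I" and x: "c \<le> x" "x < e"
    obtain a b where Iab: "I = (a,b)" by (cases I)
    have L: "a < b \<and> (\<forall>x \<in> {a..<b}. wper k x = F k (nn k - d) (2^d) (a,b) x)"
      using carrier_link[OF k2 I] d Iab by simp
    have ab: "a < b" using L by simp
    have ndd: "nn k - d = Suc \<nu>" using d by simp
    show "integral {c..<e} (wper k) \<le> 9/2 * wtilde k x * (e - c)"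
    proof (cases "\<exists>m. m \<le> k - 2 \<and> b - 2 * rr m a b \<le> c \<and> e \<le> b - rr m a b")
      case True
      then obtain m where m: "m \<le> k - 2" "b - 2 * rr m a b \<le> c" "e \<le> b - rr m a b" by blast
      have "third 2 (Im m (a,b)) \<in> carriers k (Suc d)"
        using I m(1) Iab by auto
      then have I': "(b - 2 * rr m a b, b - rr m a b) \<in> carriers k (Suc d)"
        by (simp only: third2)
      have dd: "Suc d + \<nu> = nn k" using d by simp
      show ?thesis using Suc.IH[rule_format, OF dd I', of c e x] m ce x by simp
    next
      case False
      have "integral {c..<e} (wper k) = integral {c..<e} (F k (Suc \<nu>) (2^d) (a,b))"
        using L ce Iab ndd by (intro integral_cong) auto
      also have "\<dots> \<le> 8 * 2^d * (e - c)"
        using False ab ce by (intro node[OF k2]) auto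
      also have "\<dots> \<le> 9/2 * wtilde k x * (e - c)"
      proof -
        have "wtilde k x \<ge> 2^(d+1)" using wt_ge[OF k2 I] d ce x Iab by auto
        moreover have "(0::real) \<le> 2^d" by simp
        ultimately have "8 * 2^d \<le> 9/2 * wtilde k x" by (simp only: power_Suc Suc_eq_plus1[symmetric])
        then show ?thesis using ce by (intro mult_right_mono) auto
      qed
      finally show ?thesis .
    qed
  qed
qed

lemma crossing: "c < e \<Longrightarrow> (\<And>j::int. \<not> (of_int j \<le> c \<and> e \<le> of_int j + 1)) \<Longrightarrow>
   integral {c..<e} (wper k) \<le> 4 * (e - c)"
proof -
  assume ce: "c < e" and nc: "\<And>j::int. \<not> (of_int j \<le> c \<and> e \<le> of_int j + 1)"
  define J where "J = {\<lfloor>c\<rfloor>..\<lfloor>e\<rfloor>}"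
  define G where "G = (\<lambda>j::int. F k (nn k) 1 (of_int j, of_int j + 1))"
  have finJ: "finite J" unfolding J_def by simp
  have eq: "wper k x = (\<Sum>j\<in>J. G j x)" if x: "x \<in> {c..<e}" for x
  proof -
    have fx: "\<lfloor>x\<rfloor> \<in> J" using x unfolding J_def by (auto intro: floor_mono)
    have "(\<Sum>j\<in>J. G j x) = G \<lfloor>x\<rfloor> x"
    proof (rule sum_single[OF finJ fx])
      fix j assume "j \<in> J" "j \<noteq> \<lfloor>x\<rfloor>"
      then have "x \<notin> {of_int j..<of_int j + 1}"
      proof (intro notI)
        assume "x \<in> {of_int j..<of_int j + 1}"
        then have "\<lfloor>x\<rfloor> = j" by (simp add: floor_eq_iff)
        then show False using \<open>j \<noteq> \<lfloor>x\<rfloor>\<close> by simp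
      qed
      then show "G j x = 0" unfolding G_def by (intro F_supp[OF k2]) auto
    qed
    then show ?thesis by (simp add: wper_F G_def)
  qed
  have "integral {c..<e} (wper k) = integral {c..<e} (\<lambda>x. \<Sum>j\<in>J. G j x)"
    using eq by (rule integral_cong)
  also have "\<dots> = (\<Sum>j\<in>J. integral {c..<e} (G j))"
    using finJ by (intro integral_sum) (auto simp: G_def intro: good_int good_F)
  also have "\<dots> \<le> (\<Sum>j\<in>J. 4 * integral {c..<e} (indicator {of_int j..<of_int j + 1}))"
  proof (intro sum_mono per_child)
    fix j assume "j \<in> J"
    show "of_int j < (of_int j + 1::real)" by simp
    show "good (G j)" unfolding G_def by (rule good_F)
    show "\<And>x. x \<notin> {of_int j..<of_int j + 1} \<Longrightarrow> G j x = 0" unfolding G_def by (intro F_supp[OF k2]) auto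
    show "integral {s..<t} (G j) \<le> 4 * (t - s)" if "of_int j \<le> s" "s < t" "t \<le> of_int j + 1" "s = of_int j \<or> t = of_int j + 1" for s t
      using PS[OF k2, of "of_int j" "of_int j + 1" 1 s t "nn k"] that unfolding G_def by simp
    show "(0::real) \<le> 4" by simp
    show "c < e" by fact
    show "\<not> (of_int j \<le> c \<and> e \<le> of_int j + 1)" by (rule nc)
  qed
  also have "\<dots> = 4 * integral {c..<e} (\<lambda>x. \<Sum>j\<in>J. indicator {of_int j..<of_int j + 1} x)"
    using finJ by (subst integral_sum) (auto simp: sum_distrib_left intro: integrable_ind)
  also have "\<dots> \<le> 4 * (1 * (e - c))"
  proof -
    have "integral {c..<e} (\<lambda>x. \<Sum>j\<in>J. indicator {of_int j..<of_int j + 1} x) \<le> 1 * (e - c)"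
    proof (rule int_le_const)
      show "good (\<lambda>x. \<Sum>j\<in>J. indicator {of_int j..<of_int j + 1} x)"
        using finJ by (intro good_sum good_ind)
      show "c \<le> e" using ce by simp
      fix x
      have "(\<Sum>j\<in>J. indicator {of_int j..<of_int j + 1} x) = (\<Sum>j\<in>J. if j = \<lfloor>x\<rfloor> then 1 else (0::real))"
        by (intro sum.cong refl) (simp only: indicator_def mem_unit, auto)
      also have "\<dots> \<le> 1" using finJ by simp
      finally show "(\<Sum>j\<in>J. indicator {of_int j..<of_int j + 1} x) \<le> (1::real)" .
    qed
    then show ?thesis by simp
  qed
  finally show ?thesis by simp
qed

end

theorem proposition3:
  fixes k :: nat and x :: real
  assumes "k \<ge> 2"
  shows "maxfun (wper k) x \<le> ereal (9 / 2 * wtilde k x)"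
proof -
  note k2 = assms
  have main: "integral {a..<b} (wper k) \<le> 9/2 * wtilde k x * (b - a)" if ab: "a \<le> x" "x < b" for a b
  proof (cases "\<exists>j::int. of_int j \<le> a \<and> b \<le> of_int j + 1")
    case True
    then obtain j :: int where j: "of_int j \<le> a" "b \<le> of_int j + 1" by blast
    have I: "(of_int j, of_int j + 1) \<in> carriers k 0" by auto
    show ?thesis using descent[OF k2, of "nn k"] I j ab by force
  next
    case False
    have "integral {a..<b} (wper k) \<le> 4 * (b - a)" using False ab by (intro crossing[OF k2]) auto
    also have "\<dots> \<le> 9/2 * wtilde k x * (b - a)"
    proof -
      have I: "(of_int \<lfloor>x\<rfloor>, of_int \<lfloor>x\<rfloor> + 1) \<in> carriers k 0" by auto
      have "wtilde k x \<ge> 2^(0+1)" using wt_ge[OF k2 I] by (simp add: floor_eq_iff)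
      then have "4 \<le> 9/2 * wtilde k x" by simp
      then show ?thesis using ab by (intro mult_right_mono) auto
    qed
    finally show ?thesis .
  qed
  show ?thesis unfolding maxfun_def
  proof (rule SUP_least)
    fix I assume "I \<in> {(a, b). a \<le> x \<and> x < b}"
    then obtain a b where I: "I = (a,b)" "a \<le> x" "x < b" by auto
    have "integral {a..<b} (\<lambda>t. \<bar>wper k t\<bar>) = integral {a..<b} (wper k)"
      using wper_nonneg[OF k2] by (intro integral_cong) simp
    then have "integral {a..<b} (\<lambda>t. \<bar>wper k t\<bar>) / (b - a) \<le> 9/2 * wtilde k x"
      using main[OF I(2,3)] I by (simp add: divide_le_eq)
    then show "ereal (integral {fst I..<snd I} (\<lambda>t. \<bar>wper k t\<bar>) / (snd I - fst I)) \<le> ereal (9 / 2 * wtilde k x)"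
      using I by simp
  qed
qed


end
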